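(* Let $n$ be a positive integer and let $D_n=\langle x,y\mid x^n=e,\ y^2=e,\ (xy)^2=e\rangle$ be the dihedral group with generating set $\Delta=\{x,y\}$. Then $W=W_xU_x+W_yU_y$ is a homogeneous scalar quantum walk on $C_\Delta(D_n)$ if and only if, up to a global phase, $W_x=\cos\phi$ and $W_y=i\sin\phi$ for some real $\phi$ (with both values nonzero). In particular such a walk exists; for $n=2$ this gives a homogeneous scalar quantum walk on the hypercube of dimension 2.
   Context: The Cayley graph $C_\Delta(\Gamma)$ has vertex set $\Gamma$ and directed edges $(g,g\delta)$, $g\in\Gamma,\delta\in\Delta$. Let $\ell^2(\Gamma)$ have orthonormal basis $\{|g\rangle\}_{g\in\Gamma}$ and for $\delta\in\Gamma$ let $U_\delta|g\rangle=|g\delta\rangle$. A homogeneous scalar quantum walk on $C_\Delta(\Gamma)$ is a unitary operator $W=\sum_{\delta\in\Delta}W_\delta U_\delta$ with all complex coefficients $W_\delta$ nonzero. "Up to a global phase" means that all coefficients may be multiplied by a common complex number of modulus one. *)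

theory Defs
  imports Complex_Main "HOL-Algebra.Group"
begin

text \<open>Dihedral group D_n as the concrete model: the pair (a, s) stands for x^a y^s,
  with a in {0..<n}.  Since y x y = x^(-1), we get
  x^a y^s x^b y^t = x^(a + (-1)^s b) y^(s+t).\<close>

definition dihedral :: "nat \<Rightarrow> (nat \<times> bool) monoid" where
  "dihedral n = \<lparr> carrier = {0..<n} \<times> UNIV,
     mult = (\<lambda>(a, s) (b, t). ((if s then a + n - b else a + b) mod n, s \<noteq> t)),
     one = (0, False) \<rparr>"

definition dih_x :: "nat \<Rightarrow> nat \<times> bool" where
  "dih_x n = (1 mod n, False)"

definition dih_y :: "nat \<times> bool" where
  "dih_y = (0, True)"

text \<open>The operator W = sum_{delta in Delta} W_delta U_delta with U_delta |g> = |g delta>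
  has matrix entries <h|W|g> = sum of W_delta over delta in Delta with g delta = h.\<close>

definition walk_op :: "('a, 'b) monoid_scheme \<Rightarrow> 'a set \<Rightarrow> ('a \<Rightarrow> complex)
    \<Rightarrow> ('a \<Rightarrow> complex) \<Rightarrow> 'a \<Rightarrow> complex" where
  "walk_op G \<Delta> c f h =
     (\<Sum>g\<in>carrier G. (\<Sum>\<delta>\<in>{\<delta>\<in>\<Delta>. g \<otimes>\<^bsub>G\<^esub> \<delta> = h}. c \<delta>) * f g)"

definition unitary_on :: "('a, 'b) monoid_scheme \<Rightarrow> (('a \<Rightarrow> complex) \<Rightarrow> 'a \<Rightarrow> complex) \<Rightarrow> bool" where
  "unitary_on G W \<longleftrightarrow>
     (\<forall>f. (\<Sum>h\<in>carrier G. (cmod (W f h))\<^sup>2) = (\<Sum>h\<in>carrier G. (cmod (f h))\<^sup>2)) \<and>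
     (\<forall>v. \<exists>f. \<forall>h\<in>carrier G. W f h = v h)"

definition hom_scalar_qwalk :: "('a, 'b) monoid_scheme \<Rightarrow> 'a set \<Rightarrow> ('a \<Rightarrow> complex) \<Rightarrow> bool" where
  "hom_scalar_qwalk G \<Delta> c \<longleftrightarrow> unitary_on G (walk_op G \<Delta> c) \<and> (\<forall>\<delta>\<in>\<Delta>. c \<delta> \<noteq> 0)"

end

theory Submission
  imports Defs
begin

definition mxx :: "nat \<Rightarrow> nat \<times> bool \<Rightarrow> nat \<times> bool" where
  "mxx n g = (case g of (j, s) \<Rightarrow> ((if s then j + n - 1 mod n else j + 1 mod n) mod n, s))"

definition pxx :: "nat \<Rightarrow> nat \<times> bool \<Rightarrow> nat \<times> bool" where
  "pxx n g = (case g of (k, s) \<Rightarrow> ((if s then k + 1 mod n else k + n - 1 mod n) mod n, s))"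

definition pyy :: "nat \<times> bool \<Rightarrow> nat \<times> bool" where
  "pyy g = (case g of (k, s) \<Rightarrow> (k, \<not> s))"

lemma arithA:
  fixes n k :: nat
  assumes "n \<ge> 1" "k < n"
  shows "((k + n - 1 mod n) mod n + 1 mod n) mod n = k"
proof (cases "n = 1")
  case True then have "k = 0" using assms by simp
  then show ?thesis using True by simp
next
  case False
  then have o: "1 mod n = 1" using assms by simp
  have "((k + n - 1) mod n + 1) mod n = (k + n - 1 + 1) mod n" by (simp add: mod_Suc_eq)
  also have "k + n - 1 + 1 = k + n" using assms by simp
  finally show ?thesis using o assms by simp
qed

lemma arithB:
  fixes n k :: nat
  assumes "n \<ge> 1" "k < n"
  shows "((k + 1 mod n) mod n + n - 1 mod n) mod n = k"
proof (cases "n = 1")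
  case True then have "k = 0" using assms by simp
  then show ?thesis using True by simp
next
  case False
  then have o: "1 mod n = 1" using assms by simp
  have "(k + 1) mod n + n - 1 = (k + 1) mod n + (n - 1)" using assms by simp
  then have "((k + 1) mod n + n - 1) mod n = (k + 1 + (n - 1)) mod n"
    by (simp add: mod_add_left_eq)
  also have "k + 1 + (n - 1) = k + n" using assms by simp
  finally show ?thesis using o assms by simp
qed

lemma carr: "carrier (dihedral n) = {0..<n} \<times> UNIV"
  by (simp add: dihedral_def)

lemma fin_carr[simp]: "finite (carrier (dihedral n))"
  by (simp add: carr)

lemma mult_x: "(j, s) \<otimes>\<^bsub>dihedral n\<^esub> dih_x n = mxx n (j, s)"
  by (simp add: dihedral_def dih_x_def mxx_def)

lemma mult_y: "j < n \<Longrightarrow> (j, s) \<otimes>\<^bsub>dihedral n\<^esub> dih_y = pyy (j, s)"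
  by (simp add: dihedral_def dih_y_def pyy_def)

lemma mxx_carr: "n \<ge> 1 \<Longrightarrow> g \<in> carrier (dihedral n) \<Longrightarrow> mxx n g \<in> carrier (dihedral n)"
  by (cases g) (simp add: carr mxx_def)

lemma pxx_carr: "n \<ge> 1 \<Longrightarrow> g \<in> carrier (dihedral n) \<Longrightarrow> pxx n g \<in> carrier (dihedral n)"
  by (cases g) (simp add: carr pxx_def)

lemma pyy_carr: "g \<in> carrier (dihedral n) \<Longrightarrow> pyy g \<in> carrier (dihedral n)"
  by (cases g) (simp add: carr pyy_def)

lemma px_mx: assumes n: "n \<ge> 1" and g: "g \<in> carrier (dihedral n)" shows "pxx n (mxx n g) = g"
proof -
  obtain k s where gs: "g = (k, s)" by (cases g)
  have k: "k < n" using g gs by (simp add: carr)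
  show ?thesis using arithA[OF n k] arithB[OF n k] gs by (cases s) (simp_all add: pxx_def mxx_def)
qed

lemma mx_px: assumes n: "n \<ge> 1" and g: "g \<in> carrier (dihedral n)" shows "mxx n (pxx n g) = g"
proof -
  obtain k s where gs: "g = (k, s)" by (cases g)
  have k: "k < n" using g gs by (simp add: carr)
  show ?thesis using arithA[OF n k] arithB[OF n k] gs by (cases s) (simp_all add: pxx_def mxx_def)
qed

lemma py_py: "pyy (pyy g) = g"
  by (cases g) (simp add: pyy_def)

lemma py_px: "pyy (pxx n h) = mxx n (pyy h)"
  by (cases h) (simp add: pyy_def pxx_def mxx_def)

lemma x_ne_y: "dih_x n \<noteq> dih_y"
  by (simp add: dih_x_def dih_y_def)

lemma sum_two:
  assumes "a \<noteq> b"
  shows "(\<Sum>\<delta>\<in>{\<delta>\<in>{a, b}. P \<delta>}. c \<delta>) = (if P a then c a else 0) + (if P b then (c b :: complex) else 0)"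
proof -
  have "(\<Sum>\<delta>\<in>{\<delta>\<in>{a, b}. P \<delta>}. c \<delta>) = (\<Sum>\<delta>\<in>{a,b}. if P \<delta> then c \<delta> else 0)"
    by (rule sum.inter_filter) simp
  then show ?thesis using assms by simp
qed

lemma walk_formula:
  assumes n: "n \<ge> 1" and h: "h \<in> carrier (dihedral n)"
  shows "walk_op (dihedral n) {dih_x n, dih_y} c f h = c (dih_x n) * f (pxx n h) + c dih_y * f (pyy h)"
proof -
  let ?G = "dihedral n"
  have ex: "g \<otimes>\<^bsub>?G\<^esub> dih_x n = h \<longleftrightarrow> g = pxx n h" if g: "g \<in> carrier ?G" for g
  proof -
    obtain j s where gs: "g = (j, s)" by (cases g)
    have "g \<otimes>\<^bsub>?G\<^esub> dih_x n = mxx n g" using gs mult_x by simp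
    then show ?thesis using px_mx[OF n g] mx_px[OF n h] by auto
  qed
  have ey: "g \<otimes>\<^bsub>?G\<^esub> dih_y = h \<longleftrightarrow> g = pyy h" if g: "g \<in> carrier ?G" for g
  proof -
    obtain j s where gs: "g = (j, s)" by (cases g)
    have "g \<otimes>\<^bsub>?G\<^esub> dih_y = pyy g" using gs mult_y g by (simp add: carr)
    then show ?thesis using py_py by metis
  qed
  have "walk_op ?G {dih_x n, dih_y} c f h =
     (\<Sum>g\<in>carrier ?G. (if g = pxx n h then c (dih_x n) * f g else 0) + (if g = pyy h then c dih_y * f g else 0))"
    unfolding walk_op_def
  proof (rule sum.cong)
    fix g assume g: "g \<in> carrier ?G"
    have "(\<Sum>\<delta>\<in>{\<delta>\<in>{dih_x n, dih_y}. g \<otimes>\<^bsub>?G\<^esub> \<delta> = h}. c \<delta>) =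
      (if g = pxx n h then c (dih_x n) else 0) + (if g = pyy h then c dih_y else 0)"
      unfolding sum_two[OF x_ne_y] using ex[OF g] ey[OF g] by simp
    then show "(\<Sum>\<delta>\<in>{\<delta>\<in>{dih_x n, dih_y}. g \<otimes>\<^bsub>?G\<^esub> \<delta> = h}. c \<delta>) * f g =
      (if g = pxx n h then c (dih_x n) * f g else 0) + (if g = pyy h then c dih_y * f g else 0)"
      by (simp add: distrib_right)
  qed simp
  also have "\<dots> = c (dih_x n) * f (pxx n h) + c dih_y * f (pyy h)"
    using pxx_carr[OF n h] pyy_carr[OF h] by (simp add: sum.distrib sum.delta)
  finally show ?thesis .
qed


lemma reidx_px:
  assumes n: "n \<ge> 1"
  shows "(\<Sum>h\<in>carrier (dihedral n). F (pxx n h)) = (\<Sum>h\<in>carrier (dihedral n). F h)"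
  by (rule sum.reindex_bij_witness[where i = "mxx n" and j = "pxx n"])
     (auto simp: mx_px[OF n] px_mx[OF n] pxx_carr[OF n] mxx_carr[OF n])

lemma reidx_py:
  shows "(\<Sum>h\<in>carrier (dihedral n). F (pyy h)) = (\<Sum>h\<in>carrier (dihedral n). F h)"
  by (rule sum.reindex_bij_witness[where i = "pyy" and j = "pyy"])
     (auto simp: py_py pyy_carr)

lemma sig_inv:
  assumes n: "n \<ge> 1" and h: "h \<in> carrier (dihedral n)"
  shows "pyy (pxx n (pyy (pxx n h))) = h"
  using py_px[of n h] px_mx[OF n pyy_carr[OF h]] py_py[of h] by simp

lemma sig_carr:
  assumes n: "n \<ge> 1" and h: "h \<in> carrier (dihedral n)"
  shows "pyy (pxx n h) \<in> carrier (dihedral n)"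
  using pyy_carr pxx_carr[OF n h] by blast

lemma reidx_sig:
  assumes n: "n \<ge> 1"
  shows "(\<Sum>h\<in>carrier (dihedral n). F (pyy (pxx n h))) = (\<Sum>h\<in>carrier (dihedral n). F h)"
  by (rule sum.reindex_bij_witness[where i = "\<lambda>h. pyy (pxx n h)" and j = "\<lambda>h. pyy (pxx n h)"])
     (auto simp: sig_inv[OF n] sig_carr[OF n])

lemma cmod_sum_sq: "(cmod (u + v))\<^sup>2 = (cmod u)\<^sup>2 + (cmod v)\<^sup>2 + 2 * Re (u * cnj v)"
  by (simp add: cmod_power2 power2_sum algebra_simps)

definition Sx :: "nat \<Rightarrow> (nat \<times> bool \<Rightarrow> complex) \<Rightarrow> complex" where
  "Sx n f = (\<Sum>h\<in>carrier (dihedral n). f (pxx n h) * cnj (f (pyy h)))"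

lemma norm_identity:
  assumes n: "n \<ge> 1"
  shows "(\<Sum>h\<in>carrier (dihedral n). (cmod (walk_op (dihedral n) {dih_x n, dih_y} c f h))\<^sup>2)
     = ((cmod (c (dih_x n)))\<^sup>2 + (cmod (c dih_y))\<^sup>2) * (\<Sum>h\<in>carrier (dihedral n). (cmod (f h))\<^sup>2)
       + 2 * Re (c (dih_x n) * cnj (c dih_y) * Sx n f)"
proof -
  let ?C = "carrier (dihedral n)"
  let ?a = "c (dih_x n)" and ?b = "c dih_y"
  have "(\<Sum>h\<in>?C. (cmod (walk_op (dihedral n) {dih_x n, dih_y} c f h))\<^sup>2)
     = (\<Sum>h\<in>?C. (cmod ?a)\<^sup>2 * (cmod (f (pxx n h)))\<^sup>2 + (cmod ?b)\<^sup>2 * (cmod (f (pyy h)))\<^sup>2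
          + 2 * Re (?a * cnj ?b * (f (pxx n h) * cnj (f (pyy h)))))"
  proof (rule sum.cong)
    fix h assume h: "h \<in> ?C"
    have e1: "?a * f (pxx n h) * cnj (?b * f (pyy h)) = ?a * cnj ?b * (f (pxx n h) * cnj (f (pyy h)))"
      by (simp only: complex_cnj_mult mult_ac)
    show "(cmod (walk_op (dihedral n) {dih_x n, dih_y} c f h))\<^sup>2 = (cmod ?a)\<^sup>2 * (cmod (f (pxx n h)))\<^sup>2 + (cmod ?b)\<^sup>2 * (cmod (f (pyy h)))\<^sup>2
          + 2 * Re (?a * cnj ?b * (f (pxx n h) * cnj (f (pyy h))))"
      unfolding walk_formula[OF n h] cmod_sum_sq e1 by (simp add: norm_mult power_mult_distrib)
  qed simp
  also have "\<dots> = (cmod ?a)\<^sup>2 * (\<Sum>h\<in>?C. (cmod (f (pxx n h)))\<^sup>2) + (cmod ?b)\<^sup>2 * (\<Sum>h\<in>?C. (cmod (f (pyy h)))\<^sup>2)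
          + 2 * Re (?a * cnj ?b * Sx n f)"
    by (simp add: sum.distrib sum_distrib_left Sx_def Re_sum[symmetric] mult.assoc)
  also have "\<dots> = ((cmod ?a)\<^sup>2 + (cmod ?b)\<^sup>2) * (\<Sum>h\<in>?C. (cmod (f h))\<^sup>2) + 2 * Re (?a * cnj ?b * Sx n f)"
    by (simp add: reidx_px[OF n, of "\<lambda>h. (cmod (f h))\<^sup>2"] reidx_py[of "\<lambda>h. (cmod (f h))\<^sup>2"] algebra_simps)
  finally show ?thesis .
qed

lemma Sx_real:
  assumes n: "n \<ge> 1"
  shows "Im (Sx n f) = 0"
proof -
  let ?C = "carrier (dihedral n)"
  have "cnj (Sx n f) = (\<Sum>h\<in>?C. cnj (f (pxx n h)) * f (pyy h))"
    by (simp add: Sx_def)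
  also have "\<dots> = (\<Sum>h\<in>?C. cnj (f (pxx n (pyy (pxx n h)))) * f (pyy (pyy (pxx n h))))"
    by (rule reidx_sig[OF n, symmetric])
  also have "\<dots> = (\<Sum>h\<in>?C. cnj (f (pyy h)) * f (pxx n h))"
  proof (rule sum.cong)
    fix h assume h: "h \<in> ?C"
    have "pxx n (pyy (pxx n h)) = pyy h"
      using py_px[of n h] px_mx[OF n pyy_carr[OF h]] by simp
    then show "cnj (f (pxx n (pyy (pxx n h)))) * f (pyy (pyy (pxx n h))) = cnj (f (pyy h)) * f (pxx n h)"
      by (simp add: py_py)
  qed simp
  also have "\<dots> = Sx n f" by (simp add: Sx_def mult.commute)
  finally have "cnj (Sx n f) = Sx n f" .
  then show ?thesis by (metis Reals_cnj_iff complex_is_Real_iff)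
qed


lemma unit_iff:
  assumes n: "n \<ge> 1"
  shows "unitary_on (dihedral n) (walk_op (dihedral n) {dih_x n, dih_y} c) \<longleftrightarrow>
    ((cmod (c (dih_x n)))\<^sup>2 + (cmod (c dih_y))\<^sup>2 = 1 \<and> Re (c (dih_x n) * cnj (c dih_y)) = 0)"
    (is "?L \<longleftrightarrow> ?A + ?B = 1 \<and> Re (?a * cnj ?b) = 0")
proof
  let ?C = "carrier (dihedral n)"
  let ?W = "walk_op (dihedral n) {dih_x n, dih_y} c"
  assume L: ?L
  then have iso: "\<And>f. (\<Sum>h\<in>?C. (cmod (?W f h))\<^sup>2) = (\<Sum>h\<in>?C. (cmod (f h))\<^sup>2)"
    by (simp add: unitary_on_def)
  define e :: "nat \<times> bool" where "e = (0, False)"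
  define z :: "nat \<times> bool" where "z = (1 mod n, True)"
  have eC: "e \<in> ?C" and zC: "z \<in> ?C" and ez: "e \<noteq> z" using n by (auto simp: e_def z_def carr)
  define f1 :: "nat \<times> bool \<Rightarrow> complex" where "f1 = (\<lambda>g. if g = e then 1 else 0)"
  have n1: "(\<Sum>h\<in>?C. (cmod (f1 h))\<^sup>2) = 1"
  proof -
    have "(\<Sum>h\<in>?C. (cmod (f1 h))\<^sup>2) = (\<Sum>h\<in>?C. if h = e then 1 else 0)"
      by (rule sum.cong) (auto simp: f1_def)
    then show ?thesis using eC by simp
  qed
  have s1: "Sx n f1 = 0"
    unfolding Sx_def
  proof (rule sum.neutral, rule ballI)
    fix h assume "h \<in> ?C"
    obtain k s where hs: "h = (k, s)" by (cases h)
    show "f1 (pxx n h) * cnj (f1 (pyy h)) = 0"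
      by (simp add: hs f1_def e_def pxx_def pyy_def)
  qed
  from norm_identity[OF n, of c f1] iso[of f1] n1 s1 have AB: "?A + ?B = 1" by simp
  define f2 :: "nat \<times> bool \<Rightarrow> complex" where
    "f2 = (\<lambda>g. (if g = e then 1 else 0) + (if g = z then 1 else 0))"
  have n2: "(\<Sum>h\<in>?C. (cmod (f2 h))\<^sup>2) = 2"
  proof -
    have "(\<Sum>h\<in>?C. (cmod (f2 h))\<^sup>2) = (\<Sum>h\<in>?C. (if h = e then 1 else 0) + (if h = z then 1 else 0))"
      by (rule sum.cong) (use ez in \<open>auto simp: f2_def\<close>)
    then show ?thesis using eC zC by (simp add: sum.distrib)
  qed
  have pe: "pxx n (pyy e) = z" by (simp add: e_def z_def pxx_def pyy_def)
  have pz: "pxx n (pyy z) = e" using n by (simp add: e_def z_def pxx_def pyy_def)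
  have s2: "Sx n f2 = 2"
  proof -
    have "Sx n f2 = (\<Sum>h\<in>?C. f2 (pxx n (pyy h)) * cnj (f2 (pyy (pyy h))))"
      unfolding Sx_def by (rule reidx_py[of "\<lambda>h. f2 (pxx n h) * cnj (f2 (pyy h))", symmetric])
    also have "\<dots> = (\<Sum>h\<in>?C. (if h = e then f2 (pxx n (pyy h)) else 0) + (if h = z then f2 (pxx n (pyy h)) else 0))"
      by (rule sum.cong) (auto simp: py_py f2_def)
    also have "\<dots> = f2 z + f2 e" using eC zC pe pz by (simp add: sum.distrib)
    also have "\<dots> = 2" using ez by (simp add: f2_def)
    finally show ?thesis .
  qed
  from norm_identity[OF n, of c f2] iso[of f2] n2 s2 AB
  have "Re (?a * cnj ?b) = 0" by simp
  with AB show "?A + ?B = 1 \<and> Re (?a * cnj ?b) = 0" by simp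
next
  let ?C = "carrier (dihedral n)"
  let ?W = "walk_op (dihedral n) {dih_x n, dih_y} c"
  assume R: "?A + ?B = 1 \<and> Re (?a * cnj ?b) = 0"
  have iso: "(\<Sum>h\<in>?C. (cmod (?W f h))\<^sup>2) = (\<Sum>h\<in>?C. (cmod (f h))\<^sup>2)" for f
  proof -
    have "Re (?a * cnj ?b * Sx n f) = 0" using R Sx_real[OF n, of f] by simp
    then show ?thesis using norm_identity[OF n, of c f] R by simp
  qed
  have sur: "\<exists>f. \<forall>h\<in>?C. ?W f h = v h" for v
  proof (intro exI ballI)
    fix h assume h: "h \<in> ?C"
    let ?f = "\<lambda>g. cnj ?a * v (mxx n g) + cnj ?b * v (pyy g)"
    have c1: "?a * cnj ?a + ?b * cnj ?b = 1"
    proof -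
      have "?a * cnj ?a + ?b * cnj ?b = complex_of_real (?A + ?B)"
        by (simp only: complex_norm_square[symmetric] of_real_add)
      then show ?thesis using R by simp
    qed
    have c2: "?a * cnj ?b + ?b * cnj ?a = 0"
    proof -
      have "?a * cnj ?b + ?b * cnj ?a = ?a * cnj ?b + cnj (?a * cnj ?b)" by (simp add: mult.commute)
      also have "\<dots> = 0" unfolding complex_add_cnj using R by simp
      finally show ?thesis .
    qed
    have "?W ?f h = ?a * (cnj ?a * v h + cnj ?b * v (mxx n (pyy h))) + ?b * (cnj ?a * v (mxx n (pyy h)) + cnj ?b * v h)"
      unfolding walk_formula[OF n h] using mx_px[OF n h] py_px[of n h] py_py[of h] by simp
    also have "\<dots> = (?a * cnj ?a + ?b * cnj ?b) * v h + (?a * cnj ?b + ?b * cnj ?a) * v (mxx n (pyy h))"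
      by (simp add: algebra_simps)
    also have "\<dots> = v h" using c1 c2 by simp
    finally show "?W ?f h = v h" .
  qed
  show ?L unfolding unitary_on_def using iso sur by blast
qed


lemma param_iff:
  fixes a b :: complex
  shows "((cmod a)\<^sup>2 + (cmod b)\<^sup>2 = 1 \<and> Re (a * cnj b) = 0 \<and> a \<noteq> 0 \<and> b \<noteq> 0) \<longleftrightarrow>
    (\<exists>u (\<phi>::real). cmod u = 1 \<and> cos \<phi> \<noteq> 0 \<and> sin \<phi> \<noteq> 0 \<and>
              a = u * complex_of_real (cos \<phi>) \<and> b = u * (\<i> * complex_of_real (sin \<phi>)))"
proof
  assume "\<exists>u (\<phi>::real). cmod u = 1 \<and> cos \<phi> \<noteq> 0 \<and> sin \<phi> \<noteq> 0 \<and>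
              a = u * complex_of_real (cos \<phi>) \<and> b = u * (\<i> * complex_of_real (sin \<phi>))"
  then obtain u \<phi> where u: "cmod u = 1" and cs: "cos \<phi> \<noteq> 0" "sin \<phi> \<noteq> 0"
    and a: "a = u * complex_of_real (cos \<phi>)" and b: "b = u * (\<i> * complex_of_real (sin \<phi>))" by blast
  have uu: "u * cnj u = 1" using complex_norm_square[of u] u by simp
  have u0: "u \<noteq> 0" using u by auto
  have "(cmod a)\<^sup>2 + (cmod b)\<^sup>2 = (cos \<phi>)\<^sup>2 + (sin \<phi>)\<^sup>2"
    by (simp add: a b norm_mult u power_mult_distrib)
  also have "\<dots> = 1" by simp
  finally have 1: "(cmod a)\<^sup>2 + (cmod b)\<^sup>2 = 1" .
  have "a * cnj b = (u * cnj u) * (- \<i> * complex_of_real (cos \<phi> * sin \<phi>))"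
    by (simp add: a b algebra_simps)
  then have 2: "Re (a * cnj b) = 0" using uu by simp
  show "(cmod a)\<^sup>2 + (cmod b)\<^sup>2 = 1 \<and> Re (a * cnj b) = 0 \<and> a \<noteq> 0 \<and> b \<noteq> 0"
    using 1 2 a b u0 cs by simp
next
  assume H: "(cmod a)\<^sup>2 + (cmod b)\<^sup>2 = 1 \<and> Re (a * cnj b) = 0 \<and> a \<noteq> 0 \<and> b \<noteq> 0"
  define r where "r = cmod a"
  have r0: "r > 0" using H by (simp add: r_def)
  define w where "w = b * cnj a"
  have rew: "Re w = 0"
  proof -
    have "w = cnj (a * cnj b)" by (simp add: w_def mult.commute)
    then show ?thesis using H by simp
  qed
  have wI: "w = \<i> * complex_of_real (Im w)" using rew by (simp add: complex_eq_iff)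
  have cw: "cmod w = \<bar>Im w\<bar>" using rew by (simp add: cmod_def)
  have cw2: "cmod w = cmod b * r" by (simp add: w_def norm_mult r_def)
  define t where "t = Im w / r"
  have t2: "t\<^sup>2 = (cmod b)\<^sup>2"
  proof -
    have "t\<^sup>2 = (Im w)\<^sup>2 / r\<^sup>2" by (simp add: t_def power_divide)
    also have "(Im w)\<^sup>2 = (cmod w)\<^sup>2" using cw by simp
    also have "\<dots> = (cmod b)\<^sup>2 * r\<^sup>2" using cw2 by (simp add: power_mult_distrib)
    finally show ?thesis using r0 by simp
  qed
  have "r\<^sup>2 + t\<^sup>2 = 1" using H t2 by (simp add: r_def)
  then obtain \<phi> where c: "r = cos \<phi>" and s: "t = sin \<phi>" by (rule sincos_total_2pi)
  define u where "u = a / complex_of_real r"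
  have u1: "cmod u = 1" using r0 by (simp add: u_def r_def norm_divide)
  have ea: "a = u * complex_of_real (cos \<phi>)" using r0 by (simp add: u_def c[symmetric])
  have aa: "a * cnj a = complex_of_real (r\<^sup>2)" unfolding r_def by (rule complex_norm_square[symmetric])
  have "u * (\<i> * complex_of_real (sin \<phi>)) = a * (\<i> * complex_of_real (Im w)) / complex_of_real (r\<^sup>2)"
    using r0 by (simp add: u_def s[symmetric] t_def power2_eq_square)
  also have "\<dots> = a * w / (a * cnj a)" using wI aa by simp
  also have "\<dots> = b" using H by (simp add: w_def)
  finally have eb: "b = u * (\<i> * complex_of_real (sin \<phi>))" by simp
  have "cos \<phi> \<noteq> 0" using r0 c by simp
  moreover have "sin \<phi> \<noteq> 0"
  proof
    assume "sin \<phi> = 0"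
    then have "t = 0" using s by simp
    then have "cmod b = 0" using t2 by simp
    then show False using H by simp
  qed
  ultimately show "\<exists>u (\<phi>::real). cmod u = 1 \<and> cos \<phi> \<noteq> 0 \<and> sin \<phi> \<noteq> 0 \<and>
              a = u * complex_of_real (cos \<phi>) \<and> b = u * (\<i> * complex_of_real (sin \<phi>))"
    using u1 ea eb by blast
qed

lemma qwalk_iff:
  fixes n :: nat and c :: "nat \<times> bool \<Rightarrow> complex"
  assumes n: "n \<ge> 1"
  shows "hom_scalar_qwalk (dihedral n) {dih_x n, dih_y} c \<longleftrightarrow>
           (\<exists>u (\<phi>::real). cmod u = 1 \<and> cos \<phi> \<noteq> 0 \<and> sin \<phi> \<noteq> 0 \<and>
              c (dih_x n) = u * complex_of_real (cos \<phi>) \<and>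
              c dih_y = u * (\<i> * complex_of_real (sin \<phi>)))"
  unfolding hom_scalar_qwalk_def unit_iff[OF n] param_iff[symmetric] by auto

theorem mainTheorem3:
  fixes n :: nat and c :: "nat \<times> bool \<Rightarrow> complex"
  assumes "n \<ge> 1"
  shows "(hom_scalar_qwalk (dihedral n) {dih_x n, dih_y} c \<longleftrightarrow>
           (\<exists>u (\<phi>::real). cmod u = 1 \<and> cos \<phi> \<noteq> 0 \<and> sin \<phi> \<noteq> 0 \<and>
              c (dih_x n) = u * complex_of_real (cos \<phi>) \<and>
              c dih_y = u * (\<i> * complex_of_real (sin \<phi>))))
         \<and> (\<exists>c'. hom_scalar_qwalk (dihedral n) {dih_x n, dih_y} c')"
proof
  show "hom_scalar_qwalk (dihedral n) {dih_x n, dih_y} c \<longleftrightarrow>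
           (\<exists>u (\<phi>::real). cmod u = 1 \<and> cos \<phi> \<noteq> 0 \<and> sin \<phi> \<noteq> 0 \<and>
              c (dih_x n) = u * complex_of_real (cos \<phi>) \<and>
              c dih_y = u * (\<i> * complex_of_real (sin \<phi>)))"
    by (rule qwalk_iff[OF assms])
  define c' :: "nat \<times> bool \<Rightarrow> complex" where
    "c' = (\<lambda>d. if d = dih_y then \<i> * complex_of_real (sin (pi/4)) else complex_of_real (cos (pi/4)))"
  have "\<exists>u (\<phi>::real). cmod u = 1 \<and> cos \<phi> \<noteq> 0 \<and> sin \<phi> \<noteq> 0 \<and>
              c' (dih_x n) = u * complex_of_real (cos \<phi>) \<and>
              c' dih_y = u * (\<i> * complex_of_real (sin \<phi>))"
    by (rule exI[of _ 1], rule exI[of _ "pi/4"]) (simp add: c'_def x_ne_y cos_45 sin_45)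
  then show "\<exists>c'. hom_scalar_qwalk (dihedral n) {dih_x n, dih_y} c'"
    using qwalk_iff[OF assms, of c'] by blast
qed

end
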